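(* Let $A$ be a two-dimensional evolution algebra over an arbitrary field $\mathbb{K}$ such that $A^2=A$. Then the square $\mathfrak{S}(A)$ is equal to one of $\mathfrak{D}_1,\mathfrak{D}_2,\mathfrak{D}_3,\mathfrak{D}_4,\mathfrak{D}_5$. Moreover, up to isomorphism: (i) if $\mathfrak{S}(A)=\mathfrak{D}_1$ then $A\cong A_1$ (and $A_1$ is the only such algebra); (ii) if $\mathfrak{S}(A)=\mathfrak{D}_2$ then $A\cong A_{2,\alpha}$ for some $\alpha\in\mathbb{K}^\times$, and the isomorphism classes of such algebras correspond bijectively to the elements $\widetilde{\alpha}\in G_3/\!\sim$ via $\widetilde\alpha\mapsto A_{2,\alpha}$; (iii) if $\mathfrak{S}(A)=\mathfrak{D}_3$ then $A\cong A_{3,\alpha}$ for some $\alpha\in\mathbb{K}^\times$, and for each $\alpha\in\mathbb{K}^\times$ there is exactly one such algebra, $A_{3,\alpha}$ (distinct $\alpha$ giving non-isomorphic algebras); (iv) if $\mathfrak{S}(A)=\mathfrak{D}_4$ then $A\cong A_{4,\alpha}$ for some $\alpha\in\mathbb{K}^\times$, and for each $\alpha\in\mathbb{K}^\times$ there is exactly one such algebra, $A_{4,\alpha}$ (distinct $\alpha$ giving non-isomorphic algebras); (v) if $\mathfrak{S}(A)=\mathfrak{D}_5$ then $A\cong A_{5,\alpha,\beta}$ for some $\alpha,\beta\in\mathbb{K}^\times$ with $\alpha\beta\neq1$, and for each such pair $(\alpha,\beta)$ there is exactly one such algebra, $A_{5,\alpha,\beta}$, up to permutation of the components of the pair (i.e.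 $A_{5,\alpha,\beta}\cong A_{5,\alpha',\beta'}$ iff $(\alpha',\beta')\in\{(\alpha,\beta),(\beta,\alpha)\}$).
   Context: An evolution algebra over a field $\mathbb{K}$ is a $\mathbb{K}$-algebra $A$ with a basis $\{e_i\}$ (a natural basis) such that $e_ie_j=0$ for $i\neq j$. For a two-dimensional evolution algebra with natural basis $B=\{e_1,e_2\}$ write $e_1^2=\omega_{11}e_1+\omega_{21}e_2$, $e_2^2=\omega_{12}e_1+\omega_{22}e_2$. The pseudo-square of $A$ relative to $B$ is the set of "edges" $E_B\subseteq\{L,T,R,D\}$ (left, top, right, bottom), where $L\in E_B$ iff $\omega_{11}\neq0$, $T\in E_B$ iff $\omega_{12}\neq0$, $R\in E_B$ iff $\omega_{22}\neq0$, $D\in E_B$ iff $\omega_{21}\neq0$. The square $\mathfrak{S}(A)$ is the set of all pseudo-squares $E_B$ as $B$ ranges over all natural bases of $A$. Define the following sets of pseudo-squares: $\mathfrak{D}_1=\{\{L,R\}\}$, $\mathfrak{D}_2=\{\{T,D\}\}$, $\mathfrak{D}_3=\{\{L,T,R\},\{L,R,D\}\}$, $\mathfrak{D}_4=\{\{L,T,D\},\{T,R,D\}\}$, $\mathfrak{D}_5=\{\{L,T,R,D\}\}$. The algebras (each with natural basis $\{e_1,e_2\}$): $A_1$: $e_1^2=e_1$, $e_2^2=e_2$; $A_{2,\alpha}$: $e_1^2=e_2$, $e_2^2=\alpha e_1$; $A_{3,\alpha}$: $e_1^2=e_1$, $e_2^2=\alpha e_1+e_2$; $A_{4,\alpha}$: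 $e_1^2=\alpha e_2$, $e_2^2=e_1+e_2$; $A_{5,\alpha,\beta}$: $e_1^2=e_1+\beta e_2$, $e_2^2=\alpha e_1+e_2$ (here $\alpha,\beta\in\mathbb{K}^\times$, and $\alpha\beta\neq1$ for $A_{5,\alpha,\beta}$). $G_3$ denotes the group $\mathbb{K}^\times/(\mathbb{K}^\times)^3$, $\overline\rho$ the class of $\rho\in\mathbb{K}^\times$; $\sim$ is the equivalence relation on $G_3$ with $\overline\alpha\sim\overline\beta$ iff $\overline\alpha=\overline\beta$ or $\overline\alpha=\overline\beta^2$, and $\widetilde\alpha$ denotes the class of $\overline\alpha$ in $G_3/\!\sim$. *)

theory Defs
  imports Main "HOL-Library.Product_Plus"
begin

text \<open>A two-dimensional evolution algebra over a field 'a is modelled on 'a \<times> 'a,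
  the standard basis e1 = (1,0), e2 = (0,1) being a natural basis.  The algebra is
  determined by the pair (e1^2, e2^2), where e1^2 = (w11, w21) and e2^2 = (w12, w22).\<close>

type_synonym 'a evalg = "('a \<times> 'a) \<times> ('a \<times> 'a)"

definition smul :: "'a::field \<Rightarrow> 'a \<times> 'a \<Rightarrow> 'a \<times> 'a" where
  "smul c x = (c * fst x, c * snd x)"

definition mult :: "'a::field evalg \<Rightarrow> 'a \<times> 'a \<Rightarrow> 'a \<times> 'a \<Rightarrow> 'a \<times> 'a" where
  "mult A x y = smul (fst x * fst y) (fst A) + smul (snd x * snd y) (snd A)"

text \<open>A^2 = A: every element is a finite sum of products (for a field this is the span
  of all products, since scalar multiples of products are products).\<close>
definition square_full :: "'a::field evalg \<Rightarrow> bool" where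
  "square_full A \<longleftrightarrow> (\<forall>z. \<exists>n xs ys. z = (\<Sum>i<(n::nat). mult A (xs i) (ys i)))"

definition lin_indep2 :: "'a::field \<times> 'a \<Rightarrow> 'a \<times> 'a \<Rightarrow> bool" where
  "lin_indep2 u v \<longleftrightarrow> (\<forall>a b. smul a u + smul b v = 0 \<longrightarrow> a = 0 \<and> b = 0)"

definition natural_basis :: "'a::field evalg \<Rightarrow> 'a \<times> 'a \<Rightarrow> 'a \<times> 'a \<Rightarrow> bool" where
  "natural_basis A u v \<longleftrightarrow> lin_indep2 u v \<and> mult A u v = 0 \<and> mult A v u = 0"

definition coord :: "'a::field \<times> 'a \<Rightarrow> 'a \<times> 'a \<Rightarrow> 'a \<times> 'a \<Rightarrow> 'a \<times> 'a" where
  "coord u v w = (THE ab. w = smul (fst ab) u + smul (snd ab) v)"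

datatype edge = L | T | R | D

text \<open>Relative to (u,v): u^2 = w11 u + w21 v, v^2 = w12 u + w22 v.
  L iff w11 \<noteq> 0, T iff w12 \<noteq> 0, R iff w22 \<noteq> 0, D iff w21 \<noteq> 0.\<close>
definition pseudo_square :: "'a::field evalg \<Rightarrow> 'a \<times> 'a \<Rightarrow> 'a \<times> 'a \<Rightarrow> edge set" where
  "pseudo_square A u v =
     {e. (e = L \<and> fst (coord u v (mult A u u)) \<noteq> 0)
       \<or> (e = T \<and> fst (coord u v (mult A v v)) \<noteq> 0)
       \<or> (e = R \<and> snd (coord u v (mult A v v)) \<noteq> 0)
       \<or> (e = D \<and> snd (coord u v (mult A u u)) \<noteq> 0)}"

definition square :: "'a::field evalg \<Rightarrow> edge set set" where
  "square A = {pseudo_square A u v | u v. natural_basis A u v}"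

definition D1 :: "edge set set" where "D1 = {{L, R}}"
definition D2 :: "edge set set" where "D2 = {{T, D}}"
definition D3 :: "edge set set" where "D3 = {{L, T, R}, {L, R, D}}"
definition D4 :: "edge set set" where "D4 = {{L, T, D}, {T, R, D}}"
definition D5 :: "edge set set" where "D5 = {{L, T, R, D}}"

definition evo_iso :: "'a::field evalg \<Rightarrow> 'a evalg \<Rightarrow> bool" where
  "evo_iso A B \<longleftrightarrow> (\<exists>f. bij f \<and> (\<forall>x y. f (x + y) = f x + f y)
      \<and> (\<forall>c x. f (smul c x) = smul c (f x))
      \<and> (\<forall>x y. f (mult A x y) = mult B (f x) (f y)))"

definition A1 :: "'a::field evalg" where "A1 = ((1, 0), (0, 1))"
definition A2 :: "'a::field \<Rightarrow> 'a evalg" where "A2 \<alpha> = ((0, 1), (\<alpha>, 0))"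
definition A3 :: "'a::field \<Rightarrow> 'a evalg" where "A3 \<alpha> = ((1, 0), (\<alpha>, 1))"
definition A4 :: "'a::field \<Rightarrow> 'a evalg" where "A4 \<alpha> = ((0, \<alpha>), (1, 1))"
definition A5 :: "'a::field \<Rightarrow> 'a \<Rightarrow> 'a evalg" where "A5 \<alpha> \<beta> = ((1, \<beta>), (\<alpha>, 1))"

text \<open>Equality of classes in G3 = K^x/(K^x)^3 (for nonzero arguments).\<close>
definition cube_eq :: "'a::field \<Rightarrow> 'a \<Rightarrow> bool" where
  "cube_eq \<alpha> \<beta> \<longleftrightarrow> (\<exists>c. c \<noteq> 0 \<and> \<alpha> = c ^ 3 * \<beta>)"

definition G3_sim :: "'a::field \<Rightarrow> 'a \<Rightarrow> bool" where
  "G3_sim \<alpha> \<beta> \<longleftrightarrow> cube_eq \<alpha> \<beta> \<or> cube_eq \<alpha> (\<beta> ^ 2)"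

end

theory Submission
  imports Defs
begin


lemma mult_eq: "mult ((p,q),(r,s)) (x1,x2) (y1,y2) = (x1*y1*p + x2*y2*r, x1*y1*q + x2*y2*s)"
  by (simp add: mult_def smul_def)

lemma smul_eq[simp]: "smul c (x,y) = (c*x, c*y)" by (simp add: smul_def)

lemma full_imp_det:
  fixes p q r s :: "'a::field"
  assumes "square_full ((p,q),(r,s))" shows "p*s \<noteq> q*r"
proof
  assume det: "p*s = q*r"
  obtain l m :: 'a where lm: "(l,m) \<noteq> (0,0)" "l*p + m*q = 0" "l*r + m*s = 0"
  proof (cases "(p,q) = (0,0)")
    case True
    show ?thesis
    proof (cases "(r,s) = (0,0)")
      case True
      then show ?thesis using that[of 1 0] \<open>(p,q) = (0,0)\<close> by auto
    next
      case False
      then show ?thesis using that[of s "-r"] \<open>(p,q) = (0,0)\<close> by (auto simp: algebra_simps)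
    qed
  next
    case False
    then show ?thesis using that[of q "-p"] det by (auto simp: algebra_simps)
  qed
  have key: "l * fst (\<Sum>i<n. mult ((p,q),(r,s)) (xs i) (ys i)) + m * snd (\<Sum>i<n. mult ((p,q),(r,s)) (xs i) (ys i)) = 0"
    for n :: nat and xs ys :: "nat \<Rightarrow> 'a \<times> 'a"
  proof (induction n)
    case 0 then show ?case by simp
  next
    case (Suc n)
    have "l * fst (mult ((p,q),(r,s)) (xs n) (ys n)) + m * snd (mult ((p,q),(r,s)) (xs n) (ys n)) = 0"
    proof -
      obtain a b c d where "xs n = (a,b)" "ys n = (c,d)" by (cases "xs n", cases "ys n") auto
      moreover have "l*(a*c*p + b*d*r) + m*(a*c*q + b*d*s) = a*c*(l*p+m*q) + b*d*(l*r+m*s)"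
        by (simp add: algebra_simps)
      ultimately show ?thesis using lm by (simp add: mult_eq)
    qed
    moreover have "\<And>F S f g::'a. l*(F+f) + m*(S+g) = (l*F+m*S) + (l*f+m*g)"
      by (simp add: algebra_simps)
    ultimately show ?case using Suc.IH by (simp only: sum.lessThan_Suc fst_add snd_add) simp
  qed
  define z :: "'a \<times> 'a" where "z = (if l \<noteq> 0 then (1,0) else (0,1))"
  have "l * fst z + m * snd z \<noteq> 0" using lm by (auto simp: z_def)
  moreover obtain n xs ys where "z = (\<Sum>i<(n::nat). mult ((p,q),(r,s)) (xs i) (ys i))"
    using assms unfolding square_full_def by blast
  ultimately show False using key by metis
qed

lemma det_imp_full:
  fixes p q r s :: "'a::field"
  assumes "p*s \<noteq> q*r" shows "square_full ((p,q),(r,s))"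
  unfolding square_full_def
proof
  fix z :: "'a \<times> 'a"
  obtain z1 z2 where z: "z = (z1,z2)" by (cases z)
  define dt where "dt = p*s - q*r"
  have dt: "dt \<noteq> 0" using assms by (simp add: dt_def)
  define a where "a = (z1*s - z2*r)/dt"
  define b where "b = (z2*p - z1*q)/dt"
  have e1: "(z1*s - z2*r)*p + (z2*p - z1*q)*r = z1*dt" by (simp add: dt_def algebra_simps)
  have e2: "(z1*s - z2*r)*q + (z2*p - z1*q)*s = z2*dt" by (simp add: dt_def algebra_simps)
  have "a*p + b*r = z1" using e1 dt unfolding a_def b_def by (simp add: field_simps)
  moreover have "a*q + b*s = z2" using e2 dt unfolding a_def b_def by (simp add: field_simps)
  ultimately have "z = mult ((p,q),(r,s)) (a,0) (1,0) + mult ((p,q),(r,s)) (0,b) (0,1)"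
    by (simp add: z mult_eq)
  then show "\<exists>n xs ys. z = (\<Sum>i<(n::nat). mult ((p,q),(r,s)) (xs i) (ys i))"
    by (intro exI[of _ 2] exI[of _ "\<lambda>i. if i = 0 then (a,0) else (0,b)"] exI[of _ "\<lambda>i. if i = 0 then (1,0) else (0,1)"])
      (simp add: numeral_2_eq_2)
qed


lemma coord_eq:
  assumes li: "lin_indep2 u v" and w: "w = smul a u + smul b v"
  shows "coord u v w = (a,b)"
  unfolding coord_def
proof (rule the_equality)
  show "w = smul (fst (a,b)) u + smul (snd (a,b)) v" using w by simp
next
  fix ab :: "'a \<times> 'a" assume h: "w = smul (fst ab) u + smul (snd ab) v"
  have "smul (fst ab - a) u + smul (snd ab - b) v = 0"
    using h w by (simp add: smul_def prod_eq_iff algebra_simps)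
  then have "fst ab - a = 0 \<and> snd ab - b = 0" using li unfolding lin_indep2_def by blast
  then show "ab = (a,b)" by (simp add: prod_eq_iff)
qed

lemma li_diag: "a \<noteq> 0 \<Longrightarrow> d \<noteq> 0 \<Longrightarrow> lin_indep2 (a,0) (0,d)"
  by (simp add: lin_indep2_def prod_eq_iff)
lemma li_anti: "b \<noteq> 0 \<Longrightarrow> c \<noteq> 0 \<Longrightarrow> lin_indep2 (0,b) (c,0)"
  by (simp add: lin_indep2_def prod_eq_iff)

lemma nat_pattern:
  fixes p q r s :: "'a::field"
  assumes det: "p*s \<noteq> q*r" and li: "lin_indep2 u v" and m: "mult ((p,q),(r,s)) u v = 0"
  shows "(snd u = 0 \<and> fst v = 0 \<and> fst u \<noteq> 0 \<and> snd v \<noteq> 0) \<or> (fst u = 0 \<and> snd v = 0 \<and> snd u \<noteq> 0 \<and> fst v \<noteq> 0)"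
proof -
  obtain u1 u2 v1 v2 where uv: "u = (u1,u2)" "v = (v1,v2)" by (cases u, cases v)
  have e1: "u1*v1*p + u2*v2*r = 0" and e2: "u1*v1*q + u2*v2*s = 0"
    using m by (simp_all add: uv mult_eq prod_eq_iff)
  have "(u1*v1)*(p*s - q*r) = 0"
  proof -
    have "(u1*v1)*(p*s - q*r) = s*(u1*v1*p + u2*v2*r) - r*(u1*v1*q + u2*v2*s)" by (simp add: algebra_simps)
    then show ?thesis using e1 e2 by simp
  qed
  then have z1: "u1*v1 = 0" using det by simp
  have "(u2*v2)*(p*s - q*r) = 0"
  proof -
    have "(u2*v2)*(p*s - q*r) = p*(u1*v1*q + u2*v2*s) - q*(u1*v1*p + u2*v2*r)" by (simp add: algebra_simps)
    then show ?thesis using e1 e2 by simp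
  qed
  then have z2: "u2*v2 = 0" using det by simp
  have nu: "u \<noteq> 0"
  proof
    assume "u = 0" then have "smul 1 u + smul 0 v = 0" by (simp add: smul_def prod_eq_iff)
    with li show False unfolding lin_indep2_def by (metis zero_neq_one)
  qed
  have nv: "v \<noteq> 0"
  proof
    assume "v = 0" then have "smul 0 u + smul 1 v = 0" by (simp add: smul_def prod_eq_iff)
    with li show False unfolding lin_indep2_def by (metis zero_neq_one)
  qed
  show ?thesis
  proof (cases "u1 = 0")
    case True
    then have "u2 \<noteq> 0" using nu uv by (simp add: prod_eq_iff)
    then have "v2 = 0" using z2 by simp
    then have "v1 \<noteq> 0" using nv uv by (simp add: prod_eq_iff)
    then show ?thesis using True \<open>u2 \<noteq> 0\<close> \<open>v2 = 0\<close> uv by simp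
  next
    case False
    then have "v1 = 0" using z1 by simp
    then have "v2 \<noteq> 0" using nv uv by (simp add: prod_eq_iff)
    then have "u2 = 0" using z2 by simp
    then show ?thesis using False \<open>v1 = 0\<close> \<open>v2 \<noteq> 0\<close> uv by simp
  qed
qed

definition Epat :: "'a::field \<Rightarrow> 'a \<Rightarrow> 'a \<Rightarrow> 'a \<Rightarrow> edge set" where
  "Epat p q r s = {e. (e = L \<and> p \<noteq> 0) \<or> (e = T \<and> r \<noteq> 0) \<or> (e = R \<and> s \<noteq> 0) \<or> (e = D \<and> q \<noteq> 0)}"

lemma ps_diag:
  fixes p q r s :: "'a::field"
  assumes "a \<noteq> 0" "d \<noteq> 0"
  shows "pseudo_square ((p,q),(r,s)) (a,0) (0,d) = Epat p q r s"
proof -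
  have li: "lin_indep2 (a,0) (0,d)" using assms by (rule li_diag)
  have c1: "coord (a,0) (0,d) (mult ((p,q),(r,s)) (a,0) (a,0)) = (a*p, a*a*q/d)"
    by (rule coord_eq[OF li]) (use assms in \<open>simp add: mult_eq\<close>)
  have c2: "coord (a,0) (0,d) (mult ((p,q),(r,s)) (0,d) (0,d)) = (d*d*r/a, d*s)"
    by (rule coord_eq[OF li]) (use assms in \<open>simp add: mult_eq\<close>)
  show ?thesis unfolding pseudo_square_def Epat_def c1 c2 using assms by simp
qed

lemma ps_anti:
  fixes p q r s :: "'a::field"
  assumes "b \<noteq> 0" "c \<noteq> 0"
  shows "pseudo_square ((p,q),(r,s)) (0,b) (c,0) = Epat s r q p"
proof -
  have li: "lin_indep2 (0,b) (c,0)" using assms by (rule li_anti)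
  have c1: "coord (0,b) (c,0) (mult ((p,q),(r,s)) (0,b) (0,b)) = (b*s, b*b*r/c)"
    by (rule coord_eq[OF li]) (use assms in \<open>simp add: mult_eq\<close>)
  have c2: "coord (0,b) (c,0) (mult ((p,q),(r,s)) (c,0) (c,0)) = (c*c*q/b, c*p)"
    by (rule coord_eq[OF li]) (use assms in \<open>simp add: mult_eq\<close>)
  show ?thesis unfolding pseudo_square_def Epat_def c1 c2 using assms by simp
qed

lemma square_eq:
  fixes p q r s :: "'a::field"
  assumes det: "p*s \<noteq> q*r"
  shows "square ((p,q),(r,s)) = {Epat p q r s, Epat s r q p}"
proof
  show "square ((p,q),(r,s)) \<subseteq> {Epat p q r s, Epat s r q p}"
  proof
    fix E assume "E \<in> square ((p,q),(r,s))"
    then obtain u v where E: "E = pseudo_square ((p,q),(r,s)) u v" and nb: "natural_basis ((p,q),(r,s)) u v"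
      unfolding square_def by blast
    then have "lin_indep2 u v" "mult ((p,q),(r,s)) u v = 0" unfolding natural_basis_def by auto
    from nat_pattern[OF det this] show "E \<in> {Epat p q r s, Epat s r q p}"
    proof
      assume h: "snd u = 0 \<and> fst v = 0 \<and> fst u \<noteq> 0 \<and> snd v \<noteq> 0"
      then have "u = (fst u, 0)" "v = (0, snd v)" by (simp_all add: prod_eq_iff)
      then show ?thesis using E ps_diag[of "fst u" "snd v" p q r s] h by simp
    next
      assume h: "fst u = 0 \<and> snd v = 0 \<and> snd u \<noteq> 0 \<and> fst v \<noteq> 0"
      then have "u = (0, snd u)" "v = (fst v, 0)" by (simp_all add: prod_eq_iff)
      then show ?thesis using E ps_anti[of "snd u" "fst v" p q r s] h by simp
    qed
  qed
next
  have "natural_basis ((p,q),(r,s)) (1,0) (0,1)"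
    by (simp add: natural_basis_def li_diag mult_eq prod_eq_iff)
  moreover have "natural_basis ((p,q),(r,s)) (0,1) (1,0)"
    by (simp add: natural_basis_def li_anti mult_eq prod_eq_iff)
  ultimately show "{Epat p q r s, Epat s r q p} \<subseteq> square ((p,q),(r,s))"
    unfolding square_def using ps_diag[of 1 1 p q r s] ps_anti[of 1 1 p q r s]
    by (smt (verit) empty_subsetI insert_subset mem_Collect_eq one_neq_zero)
qed

lemma Epat_simp: "Epat p q r s = (if p \<noteq> 0 then {L} else {}) \<union> (if r \<noteq> 0 then {T} else {}) \<union>
   (if s \<noteq> 0 then {R} else {}) \<union> (if q \<noteq> 0 then {D} else {})"
  unfolding Epat_def by auto


lemma iso_diag:
  fixes p q r s p' q' r' s' a d :: "'a::field"
  assumes a: "a \<noteq> 0" and d: "d \<noteq> 0"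
    and h1: "a*a*p' = p*a" and h2: "a*a*q' = q*d" and h3: "d*d*r' = r*a" and h4: "d*d*s' = s*d"
  shows "evo_iso ((p,q),(r,s)) ((p',q'),(r',s'))"
  unfolding evo_iso_def
proof (intro exI[of _ "\<lambda>z. (a * fst z, d * snd z)"] conjI allI)
  show "bij (\<lambda>z. (a * fst z, d * snd z))"
    by (rule o_bij[of "\<lambda>z. (fst z / a, snd z / d)"]) (use a d in \<open>auto simp: fun_eq_iff\<close>)
next
  fix x y :: "'a \<times> 'a"
  show "(a * fst (x + y), d * snd (x + y)) = (a * fst x, d * snd x) + (a * fst y, d * snd y)"
    by (simp add: algebra_simps)
next
  fix c and x :: "'a \<times> 'a"
  show "(a * fst (smul c x), d * snd (smul c x)) = smul c (a * fst x, d * snd x)"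
    by (simp add: smul_def algebra_simps)
next
  fix x y :: "'a \<times> 'a"
  obtain x1 x2 y1 y2 where xy: "x = (x1,x2)" "y = (y1,y2)" by (cases x, cases y)
  have "a * (x1*y1*p + x2*y2*r) = (a*x1)*(a*y1)*p' + (d*x2)*(d*y2)*r'"
  proof -
    have "(a*x1)*(a*y1)*p' + (d*x2)*(d*y2)*r' = x1*y1*(a*a*p') + x2*y2*(d*d*r')" by (simp add: algebra_simps)
    also have "\<dots> = x1*y1*(p*a) + x2*y2*(r*a)" by (simp only: h1 h3)
    finally show ?thesis by (simp add: algebra_simps)
  qed
  moreover have "d * (x1*y1*q + x2*y2*s) = (a*x1)*(a*y1)*q' + (d*x2)*(d*y2)*s'"
  proof -
    have "(a*x1)*(a*y1)*q' + (d*x2)*(d*y2)*s' = x1*y1*(a*a*q') + x2*y2*(d*d*s')" by (simp add: algebra_simps)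
    also have "\<dots> = x1*y1*(q*d) + x2*y2*(s*d)" by (simp only: h2 h4)
    finally show ?thesis by (simp add: algebra_simps)
  qed
  ultimately show "(a * fst (mult ((p,q),(r,s)) x y), d * snd (mult ((p,q),(r,s)) x y)) =
      mult ((p',q'),(r',s')) (a * fst x, d * snd x) (a * fst y, d * snd y)"
    by (simp add: xy mult_eq)
qed

lemma iso_anti:
  fixes p q r s p' q' r' s' b c :: "'a::field"
  assumes b: "b \<noteq> 0" and c: "c \<noteq> 0"
    and h1: "b*b*r' = q*c" and h2: "b*b*s' = p*b" and h3: "c*c*p' = s*c" and h4: "c*c*q' = r*b"
  shows "evo_iso ((p,q),(r,s)) ((p',q'),(r',s'))"
  unfolding evo_iso_def
proof (intro exI[of _ "\<lambda>z. (c * snd z, b * fst z)"] conjI allI)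
  show "bij (\<lambda>z. (c * snd z, b * fst z))"
    by (rule o_bij[of "\<lambda>z. (snd z / b, fst z / c)"]) (use b c in \<open>auto simp: fun_eq_iff\<close>)
next
  fix x y :: "'a \<times> 'a"
  show "(c * snd (x + y), b * fst (x + y)) = (c * snd x, b * fst x) + (c * snd y, b * fst y)"
    by (simp add: algebra_simps)
next
  fix k and x :: "'a \<times> 'a"
  show "(c * snd (smul k x), b * fst (smul k x)) = smul k (c * snd x, b * fst x)"
    by (simp add: smul_def algebra_simps)
next
  fix x y :: "'a \<times> 'a"
  obtain x1 x2 y1 y2 where xy: "x = (x1,x2)" "y = (y1,y2)" by (cases x, cases y)
  have "c * (x1*y1*q + x2*y2*s) = (c*x2)*(c*y2)*p' + (b*x1)*(b*y1)*r'"
  proof -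
    have "(c*x2)*(c*y2)*p' + (b*x1)*(b*y1)*r' = x2*y2*(c*c*p') + x1*y1*(b*b*r')" by (simp add: algebra_simps)
    also have "\<dots> = x2*y2*(s*c) + x1*y1*(q*c)" by (simp only: h3 h1)
    finally show ?thesis by (simp add: algebra_simps)
  qed
  moreover have "b * (x1*y1*p + x2*y2*r) = (c*x2)*(c*y2)*q' + (b*x1)*(b*y1)*s'"
  proof -
    have "(c*x2)*(c*y2)*q' + (b*x1)*(b*y1)*s' = x2*y2*(c*c*q') + x1*y1*(b*b*s')" by (simp add: algebra_simps)
    also have "\<dots> = x2*y2*(r*b) + x1*y1*(p*b)" by (simp only: h4 h2)
    finally show ?thesis by (simp add: algebra_simps)
  qed
  ultimately show "(c * snd (mult ((p,q),(r,s)) x y), b * fst (mult ((p,q),(r,s)) x y)) =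
      mult ((p',q'),(r',s')) (c * snd x, b * fst x) (c * snd y, b * fst y)"
    by (simp add: xy mult_eq)
qed

lemma iso_basis:
  fixes p q r s :: "'a::field"
  assumes "evo_iso ((p,q),(r,s)) B"
  shows "\<exists>u v. lin_indep2 u v \<and> mult B u v = 0 \<and> mult B u u = smul p u + smul q v
     \<and> mult B v v = smul r u + smul s v"
proof -
  obtain f where bf: "bij f" and add: "\<forall>x y. f (x + y) = f x + f y"
    and hom: "\<forall>c x. f (smul c x) = smul c (f x)"
    and mul: "\<forall>x y. f (mult ((p,q),(r,s)) x y) = mult B (f x) (f y)"
    using assms unfolding evo_iso_def by blast
  define u where "u = f (1,0)"
  define v where "v = f (0,1)"
  have f0: "f 0 = 0"
  proof -
    have "f (0 + 0) = f 0 + f 0" using add by blast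
    then show ?thesis by simp
  qed
  have lin: "f (a,b) = smul a u + smul b v" for a b
  proof -
    have s1: "f (smul a (1,0)) = smul a u" unfolding u_def using hom by blast
    have s2: "f (smul b (0,1)) = smul b v" unfolding v_def using hom by blast
    have "(a,b) = smul a (1,0) + smul b (0,1)" by (simp add: smul_def)
    then have "f (a,b) = f (smul a (1,0)) + f (smul b (0,1))" using add by metis
    then show ?thesis using s1 s2 by simp
  qed
  have "lin_indep2 u v"
    unfolding lin_indep2_def
  proof (intro allI impI)
    fix a b assume "smul a u + smul b v = 0"
    then have "f (a,b) = f 0" using lin f0 by simp
    then have "(a,b) = 0" using bf by (simp add: bij_def inj_eq)
    then show "a = 0 \<and> b = 0" by (simp add: prod_eq_iff)
  qed
  moreover have "mult B u v = 0"
    using mul[rule_format, of "(1,0)" "(0,1)"] f0 by (simp add: u_def v_def mult_eq zero_prod_def)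
  moreover have "mult B u u = smul p u + smul q v"
    using mul[rule_format, of "(1,0)" "(1,0)"] lin[of p q] by (simp add: u_def v_def mult_eq)
  moreover have "mult B v v = smul r u + smul s v"
    using mul[rule_format, of "(0,1)" "(0,1)"] lin[of r s] by (simp add: u_def v_def mult_eq)
  ultimately show ?thesis by blast
qed

lemma iso_iff:
  fixes p q r s p' q' r' s' :: "'a::field"
  assumes det: "p'*s' \<noteq> q'*r'"
  shows "evo_iso ((p,q),(r,s)) ((p',q'),(r',s')) \<longleftrightarrow>
    (\<exists>a d. a \<noteq> 0 \<and> d \<noteq> 0 \<and> a*a*p' = p*a \<and> a*a*q' = q*d \<and> d*d*r' = r*a \<and> d*d*s' = s*d) \<or>
    (\<exists>b c. b \<noteq> 0 \<and> c \<noteq> 0 \<and> b*b*r' = q*c \<and> b*b*s' = p*b \<and> c*c*p' = s*c \<and> c*c*q' = r*b)"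
proof
  assume "evo_iso ((p,q),(r,s)) ((p',q'),(r',s'))"
  from iso_basis[OF this] obtain u v where li: "lin_indep2 u v" and m: "mult ((p',q'),(r',s')) u v = 0"
    and uu: "mult ((p',q'),(r',s')) u u = smul p u + smul q v"
    and vv: "mult ((p',q'),(r',s')) v v = smul r u + smul s v" by blast
  from nat_pattern[OF det li m] show "(\<exists>a d. a \<noteq> 0 \<and> d \<noteq> 0 \<and> a*a*p' = p*a \<and> a*a*q' = q*d \<and> d*d*r' = r*a \<and> d*d*s' = s*d) \<or>
    (\<exists>b c. b \<noteq> 0 \<and> c \<noteq> 0 \<and> b*b*r' = q*c \<and> b*b*s' = p*b \<and> c*c*p' = s*c \<and> c*c*q' = r*b)"
  proof
    assume h: "snd u = 0 \<and> fst v = 0 \<and> fst u \<noteq> 0 \<and> snd v \<noteq> 0"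
    obtain x y where uv: "u = (x,0)" "v = (0,y)" and xy: "x \<noteq> 0" "y \<noteq> 0"
      using h by (metis prod.collapse)
    have e1: "(x*x*p' + 0*0*r', x*x*q' + 0*0*s') = (p*x + q*0, p*0 + q*y)"
      using uu by (simp only: uv mult_eq smul_eq add_Pair)
    have e2: "(0*0*p' + y*y*r', 0*0*q' + y*y*s') = (r*x + s*0, r*0 + s*y)"
      using vv by (simp only: uv mult_eq smul_eq add_Pair)
    show ?thesis using e1 e2 xy by auto
  next
    assume h: "fst u = 0 \<and> snd v = 0 \<and> snd u \<noteq> 0 \<and> fst v \<noteq> 0"
    obtain x y where uv: "u = (0,x)" "v = (y,0)" and xy: "x \<noteq> 0" "y \<noteq> 0"
      using h by (metis prod.collapse)
    have e1: "(0*0*p' + x*x*r', 0*0*q' + x*x*s') = (p*0 + q*y, p*x + q*0)"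
      using uu by (simp only: uv mult_eq smul_eq add_Pair)
    have e2: "(y*y*p' + 0*0*r', y*y*q' + 0*0*s') = (r*0 + s*y, r*x + s*0)"
      using vv by (simp only: uv mult_eq smul_eq add_Pair)
    show ?thesis using e1 e2 xy by auto
  qed
next
  assume "(\<exists>a d. a \<noteq> 0 \<and> d \<noteq> 0 \<and> a*a*p' = p*a \<and> a*a*q' = q*d \<and> d*d*r' = r*a \<and> d*d*s' = s*d) \<or>
    (\<exists>b c. b \<noteq> 0 \<and> c \<noteq> 0 \<and> b*b*r' = q*c \<and> b*b*s' = p*b \<and> c*c*p' = s*c \<and> c*c*q' = r*b)"
  then show "evo_iso ((p,q),(r,s)) ((p',q'),(r',s'))"
    using iso_diag iso_anti by metis
qed


lemma isoD1: "q = 0 \<Longrightarrow> r = 0 \<Longrightarrow> p \<noteq> 0 \<Longrightarrow> s \<noteq> 0 \<Longrightarrow> evo_iso ((p,q),(r,s)) (A1::'a::field evalg)"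
  unfolding A1_def by (rule iso_diag[of p s]) auto

lemma isoD2: "p = 0 \<Longrightarrow> s = 0 \<Longrightarrow> q \<noteq> 0 \<Longrightarrow> r \<noteq> 0 \<Longrightarrow> \<exists>\<alpha>. \<alpha> \<noteq> 0 \<and> evo_iso ((p,q),(r,s)) (A2 (\<alpha>::'a::field))"
  unfolding A2_def by (intro exI[of _ "r*q*q"] conjI iso_diag[of 1 "1/q"]) (auto simp: field_simps)

lemma isoD3a: "q = 0 \<Longrightarrow> p \<noteq> 0 \<Longrightarrow> r \<noteq> 0 \<Longrightarrow> s \<noteq> 0 \<Longrightarrow> \<exists>\<alpha>. \<alpha> \<noteq> 0 \<and> evo_iso ((p,q),(r,s)) (A3 (\<alpha>::'a::field))"
  unfolding A3_def by (intro exI[of _ "r*p/(s*s)"] conjI iso_diag[of p s]) (auto simp: field_simps)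

lemma isoD3b: "r = 0 \<Longrightarrow> p \<noteq> 0 \<Longrightarrow> q \<noteq> 0 \<Longrightarrow> s \<noteq> 0 \<Longrightarrow> \<exists>\<alpha>. \<alpha> \<noteq> 0 \<and> evo_iso ((p,q),(r,s)) (A3 (\<alpha>::'a::field))"
  unfolding A3_def by (intro exI[of _ "q*s/(p*p)"] conjI iso_anti[of p s]) (auto simp: field_simps)

lemma isoD4a: "p = 0 \<Longrightarrow> q \<noteq> 0 \<Longrightarrow> r \<noteq> 0 \<Longrightarrow> s \<noteq> 0 \<Longrightarrow> \<exists>\<alpha>. \<alpha> \<noteq> 0 \<and> evo_iso ((p,q),(r,s)) (A4 (\<alpha>::'a::field))"
  unfolding A4_def by (intro exI[of _ "q*r*r/(s*s*s)"] conjI iso_diag[of "s*s/r" s]) (auto simp: field_simps)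

lemma isoD4b: "s = 0 \<Longrightarrow> p \<noteq> 0 \<Longrightarrow> q \<noteq> 0 \<Longrightarrow> r \<noteq> 0 \<Longrightarrow> \<exists>\<alpha>. \<alpha> \<noteq> 0 \<and> evo_iso ((p,q),(r,s)) (A4 (\<alpha>::'a::field))"
  unfolding A4_def by (intro exI[of _ "r*q*q/(p*p*p)"] conjI iso_anti[of p "p*p/q"]) (auto simp: field_simps)

lemma isoD5: "p*s \<noteq> q*r \<Longrightarrow> p \<noteq> 0 \<Longrightarrow> q \<noteq> 0 \<Longrightarrow> r \<noteq> 0 \<Longrightarrow> s \<noteq> 0 \<Longrightarrow>
   \<exists>\<alpha> \<beta>. \<alpha> \<noteq> 0 \<and> \<beta> \<noteq> 0 \<and> \<alpha> * \<beta> \<noteq> 1 \<and> evo_iso ((p,q),(r,s)) (A5 \<alpha> (\<beta>::'a::field))"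
  unfolding A5_def by (intro exI[of _ "r*p/(s*s)"] exI[of _ "q*s/(p*p)"] conjI iso_diag[of p s]) (auto simp: field_simps)

lemma all_edge: "(\<forall>e::edge. P e) \<longleftrightarrow> P L \<and> P T \<and> P R \<and> P D"
  by (metis edge.exhaust)

lemma edge_set_eq: "(X::edge set) = Y \<longleftrightarrow> (L\<in>X \<longleftrightarrow> L\<in>Y) \<and> (T\<in>X \<longleftrightarrow> T\<in>Y) \<and> (R\<in>X \<longleftrightarrow> R\<in>Y) \<and> (D\<in>X \<longleftrightarrow> D\<in>Y)"
  by (simp only: set_eq_iff all_edge)

lemma main_part:
  fixes A :: "'a::field evalg"
  assumes "square_full A"
  shows "square A \<in> {D1, D2, D3, D4, D5}
    \<and> (square A = D1 \<longrightarrow> evo_iso A A1)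
    \<and> (square A = D2 \<longrightarrow> (\<exists>\<alpha>. \<alpha> \<noteq> 0 \<and> evo_iso A (A2 \<alpha>)))
    \<and> (square A = D3 \<longrightarrow> (\<exists>\<alpha>. \<alpha> \<noteq> 0 \<and> evo_iso A (A3 \<alpha>)))
    \<and> (square A = D4 \<longrightarrow> (\<exists>\<alpha>. \<alpha> \<noteq> 0 \<and> evo_iso A (A4 \<alpha>)))
    \<and> (square A = D5 \<longrightarrow> (\<exists>\<alpha> \<beta>. \<alpha> \<noteq> 0 \<and> \<beta> \<noteq> 0 \<and> \<alpha> * \<beta> \<noteq> 1 \<and> evo_iso A (A5 \<alpha> \<beta>)))"
proof -
  obtain p q r s where A: "A = ((p,q),(r,s))" by (metis prod.collapse)
  have det: "p*s \<noteq> q*r" using assms full_imp_det unfolding A by blast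
  have sq: "square ((p,q),(r,s)) = {Epat p q r s, Epat s r q p}" using det by (rule square_eq)
  show ?thesis
    unfolding A sq using det isoD1[of q r p s] isoD2[of p s q r] isoD3a[of q p r s] isoD3b[of r p q s]
      isoD4a[of p q r s] isoD4b[of s p q r] isoD5[of p s q r]
    by (cases "p = 0"; cases "q = 0"; cases "r = 0"; cases "s = 0")
      (simp_all add: Epat_simp D1_def D2_def D3_def D4_def D5_def doubleton_eq_iff edge_set_eq)
qed


lemma idem1: "(a::'a::field) \<noteq> 0 \<Longrightarrow> a*a = a \<Longrightarrow> a = 1"
  by (metis mult_cancel_right1 mult.commute)
lemma idem2: "(a::'a::field) \<noteq> 0 \<Longrightarrow> a*a*1 = 1*a \<Longrightarrow> a = 1"
  using idem1 by simp

lemma A2_iso: "(\<alpha>::'a::field) \<noteq> 0 \<Longrightarrow> \<beta> \<noteq> 0 \<Longrightarrow> evo_iso (A2 \<alpha>) (A2 \<beta>) \<longleftrightarrow> G3_sim \<alpha> \<beta>"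
proof -
  assume al: "\<alpha> \<noteq> 0" and be: "\<beta> \<noteq> 0"
  have "evo_iso (A2 \<alpha>) (A2 \<beta>) \<longleftrightarrow>
    (\<exists>a d. a \<noteq> 0 \<and> d \<noteq> 0 \<and> a*a*0 = 0*a \<and> a*a*1 = 1*d \<and> d*d*\<beta> = \<alpha>*a \<and> d*d*0 = 0*d) \<or>
    (\<exists>b c. b \<noteq> 0 \<and> c \<noteq> 0 \<and> b*b*\<beta> = 1*c \<and> b*b*0 = 0*b \<and> c*c*0 = 0*c \<and> c*c*1 = \<alpha>*b)"
    unfolding A2_def by (rule iso_iff) (use be in simp)
  also have "\<dots> \<longleftrightarrow> G3_sim \<alpha> \<beta>"
  proof
    assume "(\<exists>a d. a \<noteq> 0 \<and> d \<noteq> 0 \<and> a*a*0 = 0*a \<and> a*a*1 = 1*d \<and> d*d*\<beta> = \<alpha>*a \<and> d*d*0 = 0*d) \<or>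
    (\<exists>b c. b \<noteq> 0 \<and> c \<noteq> 0 \<and> b*b*\<beta> = 1*c \<and> b*b*0 = 0*b \<and> c*c*0 = 0*c \<and> c*c*1 = \<alpha>*b)"
    then show "G3_sim \<alpha> \<beta>"
    proof
      assume "\<exists>a d. a \<noteq> 0 \<and> d \<noteq> 0 \<and> a*a*0 = 0*a \<and> a*a*1 = 1*d \<and> d*d*\<beta> = \<alpha>*a \<and> d*d*0 = 0*d"
      then obtain a d where a: "a \<noteq> 0" and d: "d = a*a" and e: "d*d*\<beta> = \<alpha>*a" by auto
      have "a * (a^3*\<beta>) = a * \<alpha>" using e by (simp add: d power3_eq_cube algebra_simps)
      then have "\<alpha> = a^3*\<beta>" using a by simp
      then show ?thesis using a unfolding G3_sim_def cube_eq_def by blast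
    next
      assume "\<exists>b c. b \<noteq> 0 \<and> c \<noteq> 0 \<and> b*b*\<beta> = 1*c \<and> b*b*0 = 0*b \<and> c*c*0 = 0*c \<and> c*c*1 = \<alpha>*b"
      then obtain b c where b: "b \<noteq> 0" and c: "c = b*b*\<beta>" and e: "c*c = \<alpha>*b" by auto
      have "b * (b^3*\<beta>^2) = b * \<alpha>" using e by (simp add: c power3_eq_cube power2_eq_square algebra_simps)
      then have "\<alpha> = b^3*\<beta>^2" using b by simp
      then show ?thesis using b unfolding G3_sim_def cube_eq_def by blast
    qed
  next
    assume "G3_sim \<alpha> \<beta>"
    then show "(\<exists>a d. a \<noteq> 0 \<and> d \<noteq> 0 \<and> a*a*0 = 0*a \<and> a*a*1 = 1*d \<and> d*d*\<beta> = \<alpha>*a \<and> d*d*0 = 0*d) \<or>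
    (\<exists>b c. b \<noteq> 0 \<and> c \<noteq> 0 \<and> b*b*\<beta> = 1*c \<and> b*b*0 = 0*b \<and> c*c*0 = 0*c \<and> c*c*1 = \<alpha>*b)"
      unfolding G3_sim_def cube_eq_def
    proof
      assume "\<exists>c. c \<noteq> 0 \<and> \<alpha> = c ^ 3 * \<beta>"
      then obtain c where c: "c \<noteq> 0" "\<alpha> = c^3*\<beta>" by blast
      then have "c \<noteq> 0 \<and> c*c \<noteq> 0 \<and> c*c*0 = 0*c \<and> c*c*1 = 1*(c*c) \<and> (c*c)*(c*c)*\<beta> = \<alpha>*c \<and> (c*c)*(c*c)*0 = 0*(c*c)"
        by (simp add: power3_eq_cube algebra_simps)
      then show ?thesis by blast
    next
      assume "\<exists>c. c \<noteq> 0 \<and> \<alpha> = c ^ 3 * \<beta>^2"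
      then obtain c where c: "c \<noteq> 0" "\<alpha> = c^3*\<beta>^2" by blast
      then have "c \<noteq> 0 \<and> c*c*\<beta> \<noteq> 0 \<and> c*c*\<beta> = 1*(c*c*\<beta>) \<and> c*c*0 = 0*c \<and> (c*c*\<beta>)*(c*c*\<beta>)*0 = 0*(c*c*\<beta>) \<and> (c*c*\<beta>)*(c*c*\<beta>)*1 = \<alpha>*c"
        using be by (simp add: power3_eq_cube power2_eq_square algebra_simps)
      then show ?thesis by blast
    qed
  qed
  finally show ?thesis .
qed

lemma A3_iso: "(\<alpha>::'a::field) \<noteq> 0 \<Longrightarrow> \<beta> \<noteq> 0 \<Longrightarrow> evo_iso (A3 \<alpha>) (A3 \<beta>) \<longleftrightarrow> \<alpha> = \<beta>"
proof -
  assume al: "\<alpha> \<noteq> 0" and be: "\<beta> \<noteq> 0"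
  have "evo_iso (A3 \<alpha>) (A3 \<beta>) \<longleftrightarrow>
    (\<exists>a d. a \<noteq> 0 \<and> d \<noteq> 0 \<and> a*a*1 = 1*a \<and> a*a*0 = 0*d \<and> d*d*\<beta> = \<alpha>*a \<and> d*d*1 = 1*d) \<or>
    (\<exists>b c. b \<noteq> 0 \<and> c \<noteq> 0 \<and> b*b*\<beta> = 0*c \<and> b*b*1 = 1*b \<and> c*c*1 = 1*c \<and> c*c*0 = \<alpha>*b)"
    unfolding A3_def by (rule iso_iff) simp
  also have "\<dots> \<longleftrightarrow> \<alpha> = \<beta>"
  proof
    assume "(\<exists>a d. a \<noteq> 0 \<and> d \<noteq> 0 \<and> a*a*1 = 1*a \<and> a*a*0 = 0*d \<and> d*d*\<beta> = \<alpha>*a \<and> d*d*1 = 1*d) \<or>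
    (\<exists>b c. b \<noteq> 0 \<and> c \<noteq> 0 \<and> b*b*\<beta> = 0*c \<and> b*b*1 = 1*b \<and> c*c*1 = 1*c \<and> c*c*0 = \<alpha>*b)"
    then show "\<alpha> = \<beta>"
    proof
      assume "\<exists>a d. a \<noteq> 0 \<and> d \<noteq> 0 \<and> a*a*1 = 1*a \<and> a*a*0 = 0*d \<and> d*d*\<beta> = \<alpha>*a \<and> d*d*1 = 1*d"
      then obtain a d where "a \<noteq> 0" "d \<noteq> 0" "a*a*1 = 1*a" "d*d*1 = 1*d" "d*d*\<beta> = \<alpha>*a" by blast
      then have "a = 1" "d = 1" "d*d*\<beta> = \<alpha>*a" using idem2 by blast+
      then show ?thesis by simp
    next
      assume "\<exists>b c. b \<noteq> 0 \<and> c \<noteq> 0 \<and> b*b*\<beta> = 0*c \<and> b*b*1 = 1*b \<and> c*c*1 = 1*c \<and> c*c*0 = \<alpha>*b"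
      then show ?thesis using al by auto
    qed
  next
    assume "\<alpha> = \<beta>"
    then show "(\<exists>a d. a \<noteq> 0 \<and> d \<noteq> 0 \<and> a*a*1 = 1*a \<and> a*a*0 = 0*d \<and> d*d*\<beta> = \<alpha>*a \<and> d*d*1 = 1*d) \<or>
    (\<exists>b c. b \<noteq> 0 \<and> c \<noteq> 0 \<and> b*b*\<beta> = 0*c \<and> b*b*1 = 1*b \<and> c*c*1 = 1*c \<and> c*c*0 = \<alpha>*b)"
      by (intro disjI1 exI[of _ 1]) simp
  qed
  finally show ?thesis .
qed

lemma A4_iso: "(\<alpha>::'a::field) \<noteq> 0 \<Longrightarrow> \<beta> \<noteq> 0 \<Longrightarrow> evo_iso (A4 \<alpha>) (A4 \<beta>) \<longleftrightarrow> \<alpha> = \<beta>"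
proof -
  assume al: "\<alpha> \<noteq> 0" and be: "\<beta> \<noteq> 0"
  have "evo_iso (A4 \<alpha>) (A4 \<beta>) \<longleftrightarrow>
    (\<exists>a d. a \<noteq> 0 \<and> d \<noteq> 0 \<and> a*a*0 = 0*a \<and> a*a*\<beta> = \<alpha>*d \<and> d*d*1 = 1*a \<and> d*d*1 = 1*d) \<or>
    (\<exists>b c. b \<noteq> 0 \<and> c \<noteq> 0 \<and> b*b*1 = \<alpha>*c \<and> b*b*1 = 0*b \<and> c*c*0 = 1*c \<and> c*c*\<beta> = 1*b)"
    unfolding A4_def by (rule iso_iff) (use be in simp)
  also have "\<dots> \<longleftrightarrow> \<alpha> = \<beta>"
  proof
    assume "(\<exists>a d. a \<noteq> 0 \<and> d \<noteq> 0 \<and> a*a*0 = 0*a \<and> a*a*\<beta> = \<alpha>*d \<and> d*d*1 = 1*a \<and> d*d*1 = 1*d) \<or>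
    (\<exists>b c. b \<noteq> 0 \<and> c \<noteq> 0 \<and> b*b*1 = \<alpha>*c \<and> b*b*1 = 0*b \<and> c*c*0 = 1*c \<and> c*c*\<beta> = 1*b)"
    then show "\<alpha> = \<beta>"
    proof
      assume "\<exists>a d. a \<noteq> 0 \<and> d \<noteq> 0 \<and> a*a*0 = 0*a \<and> a*a*\<beta> = \<alpha>*d \<and> d*d*1 = 1*a \<and> d*d*1 = 1*d"
      then obtain a d where "a \<noteq> 0" "d \<noteq> 0" "d*d*1 = 1*a" "d*d*1 = 1*d" "a*a*\<beta> = \<alpha>*d" by blast
      moreover then have "d = 1" using idem2 by blast
      ultimately show ?thesis by simp
    next
      assume "\<exists>b c. b \<noteq> 0 \<and> c \<noteq> 0 \<and> b*b*1 = \<alpha>*c \<and> b*b*1 = 0*b \<and> c*c*0 = 1*c \<and> c*c*\<beta> = 1*b"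
      then show ?thesis by auto
    qed
  next
    assume "\<alpha> = \<beta>"
    then show "(\<exists>a d. a \<noteq> 0 \<and> d \<noteq> 0 \<and> a*a*0 = 0*a \<and> a*a*\<beta> = \<alpha>*d \<and> d*d*1 = 1*a \<and> d*d*1 = 1*d) \<or>
    (\<exists>b c. b \<noteq> 0 \<and> c \<noteq> 0 \<and> b*b*1 = \<alpha>*c \<and> b*b*1 = 0*b \<and> c*c*0 = 1*c \<and> c*c*\<beta> = 1*b)"
      by (intro disjI1 exI[of _ 1]) simp
  qed
  finally show ?thesis .
qed

lemma A5_iso: "(\<alpha>::'a::field) \<noteq> 0 \<Longrightarrow> \<beta> \<noteq> 0 \<Longrightarrow> \<alpha>' * \<beta>' \<noteq> 1 \<Longrightarrow>
   evo_iso (A5 \<alpha> \<beta>) (A5 \<alpha>' \<beta>') \<longleftrightarrow> (\<alpha>', \<beta>') = (\<alpha>, \<beta>) \<or> (\<alpha>', \<beta>') = (\<beta>, \<alpha>)"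
proof -
  assume al: "\<alpha> \<noteq> 0" and be: "\<beta> \<noteq> 0" and det: "\<alpha>' * \<beta>' \<noteq> 1"
  have "evo_iso (A5 \<alpha> \<beta>) (A5 \<alpha>' \<beta>') \<longleftrightarrow>
    (\<exists>a d. a \<noteq> 0 \<and> d \<noteq> 0 \<and> a*a*1 = 1*a \<and> a*a*\<beta>' = \<beta>*d \<and> d*d*\<alpha>' = \<alpha>*a \<and> d*d*1 = 1*d) \<or>
    (\<exists>b c. b \<noteq> 0 \<and> c \<noteq> 0 \<and> b*b*\<alpha>' = \<beta>*c \<and> b*b*1 = 1*b \<and> c*c*1 = 1*c \<and> c*c*\<beta>' = \<alpha>*b)"
    unfolding A5_def by (rule iso_iff) (use det in \<open>simp add: mult.commute\<close>)
  also have "\<dots> \<longleftrightarrow> (\<alpha>', \<beta>') = (\<alpha>, \<beta>) \<or> (\<alpha>', \<beta>') = (\<beta>, \<alpha>)"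
  proof
    assume "(\<exists>a d. a \<noteq> 0 \<and> d \<noteq> 0 \<and> a*a*1 = 1*a \<and> a*a*\<beta>' = \<beta>*d \<and> d*d*\<alpha>' = \<alpha>*a \<and> d*d*1 = 1*d) \<or>
    (\<exists>b c. b \<noteq> 0 \<and> c \<noteq> 0 \<and> b*b*\<alpha>' = \<beta>*c \<and> b*b*1 = 1*b \<and> c*c*1 = 1*c \<and> c*c*\<beta>' = \<alpha>*b)"
    then show "(\<alpha>', \<beta>') = (\<alpha>, \<beta>) \<or> (\<alpha>', \<beta>') = (\<beta>, \<alpha>)"
    proof
      assume "\<exists>a d. a \<noteq> 0 \<and> d \<noteq> 0 \<and> a*a*1 = 1*a \<and> a*a*\<beta>' = \<beta>*d \<and> d*d*\<alpha>' = \<alpha>*a \<and> d*d*1 = 1*d"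
      then obtain a d where "a \<noteq> 0" "d \<noteq> 0" "a*a*1 = 1*a" "d*d*1 = 1*d" "a*a*\<beta>' = \<beta>*d" "d*d*\<alpha>' = \<alpha>*a" by blast
      moreover then have "a = 1" "d = 1" using idem2 by blast+
      ultimately show ?thesis by simp
    next
      assume "\<exists>b c. b \<noteq> 0 \<and> c \<noteq> 0 \<and> b*b*\<alpha>' = \<beta>*c \<and> b*b*1 = 1*b \<and> c*c*1 = 1*c \<and> c*c*\<beta>' = \<alpha>*b"
      then obtain b c where "b \<noteq> 0" "c \<noteq> 0" "b*b*1 = 1*b" "c*c*1 = 1*c" "b*b*\<alpha>' = \<beta>*c" "c*c*\<beta>' = \<alpha>*b" by blast
      moreover then have "b = 1" "c = 1" using idem2 by blast+
      ultimately show ?thesis by simp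
    qed
  next
    assume "(\<alpha>', \<beta>') = (\<alpha>, \<beta>) \<or> (\<alpha>', \<beta>') = (\<beta>, \<alpha>)"
    then show "(\<exists>a d. a \<noteq> 0 \<and> d \<noteq> 0 \<and> a*a*1 = 1*a \<and> a*a*\<beta>' = \<beta>*d \<and> d*d*\<alpha>' = \<alpha>*a \<and> d*d*1 = 1*d) \<or>
    (\<exists>b c. b \<noteq> 0 \<and> c \<noteq> 0 \<and> b*b*\<alpha>' = \<beta>*c \<and> b*b*1 = 1*b \<and> c*c*1 = 1*c \<and> c*c*\<beta>' = \<alpha>*b)"
    proof
      assume "(\<alpha>', \<beta>') = (\<alpha>, \<beta>)" then show ?thesis by (intro disjI1 exI[of _ 1]) simp
    next
      assume "(\<alpha>', \<beta>') = (\<beta>, \<alpha>)" then show ?thesis by (intro disjI2 exI[of _ 1]) simp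
    qed
  qed
  finally show ?thesis .
qed

lemma sq_A1: "square_full (A1::'a::field evalg) \<and> square (A1::'a evalg) = D1"
  unfolding A1_def using det_imp_full[of "1::'a" 1 0 0] square_eq[of "1::'a" 1 0 0]
  by (simp add: Epat_simp D1_def doubleton_eq_iff edge_set_eq)

lemma sq_A2: "(\<alpha>::'a::field) \<noteq> 0 \<Longrightarrow> square_full (A2 \<alpha>) \<and> square (A2 \<alpha>) = D2"
  unfolding A2_def using det_imp_full[of "0::'a" 0 1 \<alpha>] square_eq[of "0::'a" 0 1 \<alpha>]
  by (simp add: Epat_simp D2_def doubleton_eq_iff edge_set_eq)

lemma sq_A3: "(\<alpha>::'a::field) \<noteq> 0 \<Longrightarrow> square_full (A3 \<alpha>) \<and> square (A3 \<alpha>) = D3"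
  unfolding A3_def using det_imp_full[of "1::'a" 1 0 \<alpha>] square_eq[of "1::'a" 1 0 \<alpha>]
  by (simp add: Epat_simp D3_def doubleton_eq_iff edge_set_eq)

lemma sq_A4: "(\<alpha>::'a::field) \<noteq> 0 \<Longrightarrow> square_full (A4 \<alpha>) \<and> square (A4 \<alpha>) = D4"
  unfolding A4_def using det_imp_full[of "0::'a" 1 \<alpha> 1] square_eq[of "0::'a" 1 \<alpha> 1]
  by (simp add: Epat_simp D4_def doubleton_eq_iff edge_set_eq)

lemma sq_A5: "(\<alpha>::'a::field) \<noteq> 0 \<Longrightarrow> \<beta> \<noteq> 0 \<Longrightarrow> \<alpha> * \<beta> \<noteq> 1 \<Longrightarrow> square_full (A5 \<alpha> \<beta>) \<and> square (A5 \<alpha> \<beta>) = D5"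
  unfolding A5_def using det_imp_full[of "1::'a" 1 \<beta> \<alpha>] square_eq[of "1::'a" 1 \<beta> \<alpha>]
  by (simp add: Epat_simp D5_def doubleton_eq_iff edge_set_eq mult.commute)


theorem theorem3p7:
  fixes A :: "'a::field evalg"
  assumes "square_full A"
  shows "square A \<in> {D1, D2, D3, D4, D5}
    \<and> (square A = D1 \<longrightarrow> evo_iso A A1)
    \<and> (square A = D2 \<longrightarrow> (\<exists>\<alpha>. \<alpha> \<noteq> 0 \<and> evo_iso A (A2 \<alpha>)))
    \<and> (square A = D3 \<longrightarrow> (\<exists>\<alpha>. \<alpha> \<noteq> 0 \<and> evo_iso A (A3 \<alpha>)))
    \<and> (square A = D4 \<longrightarrow> (\<exists>\<alpha>. \<alpha> \<noteq> 0 \<and> evo_iso A (A4 \<alpha>)))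
    \<and> (square A = D5 \<longrightarrow> (\<exists>\<alpha> \<beta>. \<alpha> \<noteq> 0 \<and> \<beta> \<noteq> 0 \<and> \<alpha> * \<beta> \<noteq> 1 \<and> evo_iso A (A5 \<alpha> \<beta>)))
    \<and> (square_full (A1 :: 'a evalg) \<and> square (A1 :: 'a evalg) = D1)
    \<and> (\<forall>\<alpha>::'a. \<alpha> \<noteq> 0 \<longrightarrow> square_full (A2 \<alpha>) \<and> square (A2 \<alpha>) = D2)
    \<and> (\<forall>\<alpha> \<beta>::'a. \<alpha> \<noteq> 0 \<longrightarrow> \<beta> \<noteq> 0 \<longrightarrow> (evo_iso (A2 \<alpha>) (A2 \<beta>) \<longleftrightarrow> G3_sim \<alpha> \<beta>))
    \<and> (\<forall>\<alpha>::'a. \<alpha> \<noteq> 0 \<longrightarrow> square_full (A3 \<alpha>) \<and> square (A3 \<alpha>) = D3)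
    \<and> (\<forall>\<alpha> \<beta>::'a. \<alpha> \<noteq> 0 \<longrightarrow> \<beta> \<noteq> 0 \<longrightarrow> (evo_iso (A3 \<alpha>) (A3 \<beta>) \<longleftrightarrow> \<alpha> = \<beta>))
    \<and> (\<forall>\<alpha>::'a. \<alpha> \<noteq> 0 \<longrightarrow> square_full (A4 \<alpha>) \<and> square (A4 \<alpha>) = D4)
    \<and> (\<forall>\<alpha> \<beta>::'a. \<alpha> \<noteq> 0 \<longrightarrow> \<beta> \<noteq> 0 \<longrightarrow> (evo_iso (A4 \<alpha>) (A4 \<beta>) \<longleftrightarrow> \<alpha> = \<beta>))
    \<and> (\<forall>\<alpha> \<beta>::'a. \<alpha> \<noteq> 0 \<longrightarrow> \<beta> \<noteq> 0 \<longrightarrow> \<alpha> * \<beta> \<noteq> 1 \<longrightarrow>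
          square_full (A5 \<alpha> \<beta>) \<and> square (A5 \<alpha> \<beta>) = D5)
    \<and> (\<forall>\<alpha> \<beta> \<alpha>' \<beta>'::'a. \<alpha> \<noteq> 0 \<longrightarrow> \<beta> \<noteq> 0 \<longrightarrow> \<alpha> * \<beta> \<noteq> 1 \<longrightarrow>
          \<alpha>' \<noteq> 0 \<longrightarrow> \<beta>' \<noteq> 0 \<longrightarrow> \<alpha>' * \<beta>' \<noteq> 1 \<longrightarrow>
          (evo_iso (A5 \<alpha> \<beta>) (A5 \<alpha>' \<beta>') \<longleftrightarrow> (\<alpha>', \<beta>') = (\<alpha>, \<beta>) \<or> (\<alpha>', \<beta>') = (\<beta>, \<alpha>)))"
proof -
  note m = main_part[OF assms]
  have q1: "\<forall>\<alpha>::'a. \<alpha> \<noteq> 0 \<longrightarrow> square_full (A2 \<alpha>) \<and> square (A2 \<alpha>) = D2" using sq_A2 by blast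
  have q2: "\<forall>\<alpha> \<beta>::'a. \<alpha> \<noteq> 0 \<longrightarrow> \<beta> \<noteq> 0 \<longrightarrow> (evo_iso (A2 \<alpha>) (A2 \<beta>) \<longleftrightarrow> G3_sim \<alpha> \<beta>)" using A2_iso by blast
  have q3: "\<forall>\<alpha>::'a. \<alpha> \<noteq> 0 \<longrightarrow> square_full (A3 \<alpha>) \<and> square (A3 \<alpha>) = D3" using sq_A3 by blast
  have q4: "\<forall>\<alpha> \<beta>::'a. \<alpha> \<noteq> 0 \<longrightarrow> \<beta> \<noteq> 0 \<longrightarrow> (evo_iso (A3 \<alpha>) (A3 \<beta>) \<longleftrightarrow> \<alpha> = \<beta>)" using A3_iso by blast
  have q5: "\<forall>\<alpha>::'a. \<alpha> \<noteq> 0 \<longrightarrow> square_full (A4 \<alpha>) \<and> square (A4 \<alpha>) = D4" using sq_A4 by blast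
  have q6: "\<forall>\<alpha> \<beta>::'a. \<alpha> \<noteq> 0 \<longrightarrow> \<beta> \<noteq> 0 \<longrightarrow> (evo_iso (A4 \<alpha>) (A4 \<beta>) \<longleftrightarrow> \<alpha> = \<beta>)" using A4_iso by blast
  have q7: "\<forall>\<alpha> \<beta>::'a. \<alpha> \<noteq> 0 \<longrightarrow> \<beta> \<noteq> 0 \<longrightarrow> \<alpha> * \<beta> \<noteq> 1 \<longrightarrow>
          square_full (A5 \<alpha> \<beta>) \<and> square (A5 \<alpha> \<beta>) = D5" using sq_A5 by blast
  have q8: "\<forall>\<alpha> \<beta> \<alpha>' \<beta>'::'a. \<alpha> \<noteq> 0 \<longrightarrow> \<beta> \<noteq> 0 \<longrightarrow> \<alpha> * \<beta> \<noteq> 1 \<longrightarrow>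
          \<alpha>' \<noteq> 0 \<longrightarrow> \<beta>' \<noteq> 0 \<longrightarrow> \<alpha>' * \<beta>' \<noteq> 1 \<longrightarrow>
          (evo_iso (A5 \<alpha> \<beta>) (A5 \<alpha>' \<beta>') \<longleftrightarrow> (\<alpha>', \<beta>') = (\<alpha>, \<beta>) \<or> (\<alpha>', \<beta>') = (\<beta>, \<alpha>))"
    using A5_iso by blast
  have q0: "square_full (A1 :: 'a evalg)" "square (A1 :: 'a evalg) = D1" using sq_A1 by blast+
  show ?thesis
    apply (insert m q0 q1 q2 q3 q4 q5 q6 q7 q8)
    apply (elim conjE)
    apply (intro conjI)
    apply assumption+
    done
qed

end
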